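(* If the set of control constraints $\mathcal{U}$ satisfies Putinar's condition, then so does the set $\mathcal{T}\cup\mathcal{B}\cup\mathcal{U}$ (as a set of polynomials in the variables $(t,x,u)$).
   Context: Fix $n\ge1$, $T>0$, $K\ge1$. Let $\mathcal{U}=\{q_1,\dots,q_r\}$ be real polynomials in $u\in\mathbb{R}^K$ such that $U=\{u:q(u)\ge0\ \forall q\in\mathcal{U}\}$ is compact. A Hermitian trace-one matrix $\rho\in\mathbb{C}^{n\times n}$ is represented by the real vector $x$ consisting of $\operatorname{Re}\rho_{ij}$ for $1\le i\le j\le n$ excluding $\operatorname{Re}\rho_{nn}$, and $\operatorname{Im}\rho_{ij}$ for $1\le i<j\le n$ (with $\rho_{nn}=1-\sum_{i<n}\rho_{ii}$, $\rho_{ji}=\overline{\rho_{ij}}$); in these coordinates $\operatorname{tr}\rho^2=(1-\sum_{i=1}^{n-1}\operatorname{Re}\rho_{ii})^2+\sum_{i=1}^{n-1}\operatorname{Re}\rho_{ii}^2+2\sum_{1\le i<j\le n}|\rho_{ij}|^2$. Set $\mathcal{T}=\{t,\ T-t\}$ (polynomials in $t$) and $\mathcal{B}=\{1-\operatorname{tr}\rho^2,\ \operatorname{tr}\rho^2-1\}$ (polynomials in $x$). For a finite set $\mathcal{S}=\{a_1,\dots,a_p\}$ of real polynomials in variables $y=(y_1,\dots,y_N)$, $Q_d[\mathcal{S}]=\{s_0+\sum_{i=1}^p s_ia_i: s_i \text{ sums of squares of real polynomials in } y,\ \deg(s_ia_i)\le d\}$. $\mathcal{S}$ satisfies Putinar's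 condition if there exists $M>0$ such that $M-\sum_{i=1}^N y_i^2\in Q_d[\mathcal{S}]$ for some $d$. *)

theory Defs
  imports "HOL-Library.Poly_Mapping" "HOL-Analysis.Analysis"
begin

type_synonym mpoly = "(nat \<Rightarrow>\<^sub>0 nat) \<Rightarrow>\<^sub>0 real"

definition Var :: "nat \<Rightarrow> mpoly" where
  "Var v = Poly_Mapping.single (Poly_Mapping.single v 1) 1"

definition Const :: "real \<Rightarrow> mpoly" where
  "Const c = Poly_Mapping.single 0 c"

definition tdeg :: "mpoly \<Rightarrow> nat" where
  "tdeg p = Max (insert 0 ((\<lambda>m. \<Sum>v\<in>Poly_Mapping.keys m. Poly_Mapping.lookup m v) ` Poly_Mapping.keys p))"

definition polys_in :: "nat set \<Rightarrow> mpoly set" where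
  "polys_in V = {p. \<forall>m\<in>Poly_Mapping.keys p. Poly_Mapping.keys m \<subseteq> V}"

definition peval :: "mpoly \<Rightarrow> (nat \<Rightarrow> real) \<Rightarrow> real" where
  "peval p a = (\<Sum>m\<in>Poly_Mapping.keys p. Poly_Mapping.lookup p m * (\<Prod>v\<in>Poly_Mapping.keys m. a v ^ Poly_Mapping.lookup m v))"

definition sos :: "nat set \<Rightarrow> mpoly \<Rightarrow> bool" where
  "sos V s \<longleftrightarrow> (\<exists>gs. set gs \<subseteq> polys_in V \<and> s = sum_list (map (\<lambda>g. g * g) gs))"

text \<open>truncated quadratic module Q_d[S] in the variables V (S finite)\<close>
definition quadmod :: "nat set \<Rightarrow> nat \<Rightarrow> mpoly set \<Rightarrow> mpoly set" where
  "quadmod V d S = {p. \<exists>s0 s. sos V s0 \<and> tdeg s0 \<le> d \<and>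
      (\<forall>a\<in>S. sos V (s a) \<and> tdeg (s a * a) \<le> d) \<and>
      p = s0 + (\<Sum>a\<in>S. s a * a)}"

definition putinar :: "nat set \<Rightarrow> mpoly set \<Rightarrow> bool" where
  "putinar V S \<longleftrightarrow> (\<exists>M>0. \<exists>d. Const M - (\<Sum>v\<in>V. Var v * Var v) \<in> quadmod V d S)"

text \<open>Variable layout for (t, x, u): t is variable 0; for 0-based indices i \<le> j < n,
  (i,j) \<noteq> (n-1,n-1), Re rho_ij is variable 1 + i*n + j; for i < j < n, Im rho_ij is
  variable 1 + j*n + i; u_k (k < K) is variable n^2 + k.
  Hence the x-variables are exactly {1..<n^2} and the u-variables {n^2..<n^2+K}.\<close>

definition t_var :: nat where "t_var = 0"
definition re_var :: "nat \<Rightarrow> nat \<Rightarrow> nat \<Rightarrow> nat" where "re_var n i j = 1 + i * n + j"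
definition im_var :: "nat \<Rightarrow> nat \<Rightarrow> nat \<Rightarrow> nat" where "im_var n i j = 1 + j * n + i"

definition x_vars :: "nat \<Rightarrow> nat set" where
  "x_vars n = {re_var n i j | i j. i \<le> j \<and> j < n \<and> \<not> (i = n - 1 \<and> j = n - 1)}
            \<union> {im_var n i j | i j. i < j \<and> j < n}"

definition u_vars :: "nat \<Rightarrow> nat \<Rightarrow> nat set" where
  "u_vars n K = {n\<^sup>2 ..< n\<^sup>2 + K}"

definition all_vars :: "nat \<Rightarrow> nat \<Rightarrow> nat set" where
  "all_vars n K = {t_var} \<union> x_vars n \<union> u_vars n K"

text \<open>tr rho^2 in the coordinates x\<close>
definition trace_sq :: "nat \<Rightarrow> mpoly" where
  "trace_sq n =
     (1 - (\<Sum>i<n - 1. Var (re_var n i i)))^2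
     + (\<Sum>i<n - 1. (Var (re_var n i i))^2)
     + 2 * (\<Sum>j<n. \<Sum>i<j. (Var (re_var n i j))^2 + (Var (im_var n i j))^2)"

definition T_set :: "real \<Rightarrow> mpoly set" where
  "T_set T = {Var t_var, Const T - Var t_var}"

definition B_set :: "nat \<Rightarrow> mpoly set" where
  "B_set n = {1 - trace_sq n, trace_sq n - 1}"

end

theory Submission
  imports Defs
begin

lemma polys_in_mono: "V \<subseteq> W \<Longrightarrow> polys_in V \<subseteq> polys_in W"
  unfolding polys_in_def by blast

lemma polys_in_add:
  assumes p: "p \<in> polys_in V" and q: "q \<in> polys_in V" shows "p + q \<in> polys_in V"
proof -
  show ?thesis unfolding polys_in_def
  proof (rule CollectI, rule ballI)
    fix m assume "m \<in> Poly_Mapping.keys (p + q)"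
    then have "m \<in> Poly_Mapping.keys p \<union> Poly_Mapping.keys q" using keys_add[of p q] by (rule subsetD[rotated])
    then show "Poly_Mapping.keys m \<subseteq> V" using p q unfolding polys_in_def by auto
  qed
qed

lemma polys_in_diff:
  assumes p: "p \<in> polys_in V" and q: "q \<in> polys_in V" shows "p - q \<in> polys_in V"
proof -
  show ?thesis unfolding polys_in_def
  proof (rule CollectI, rule ballI)
    fix m assume "m \<in> Poly_Mapping.keys (p - q)"
    then have "m \<in> Poly_Mapping.keys p \<union> Poly_Mapping.keys q" using keys_diff[of p q] by (rule subsetD[rotated])
    then show "Poly_Mapping.keys m \<subseteq> V" using p q unfolding polys_in_def by auto
  qed
qed

lemma polys_in_mult: "p \<in> polys_in V \<Longrightarrow> q \<in> polys_in V \<Longrightarrow> p * q \<in> polys_in V"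
  unfolding polys_in_def
proof safe
  fix m x
  assume p: "\<forall>m\<in>Poly_Mapping.keys p. Poly_Mapping.keys m \<subseteq> V"
    and q: "\<forall>m\<in>Poly_Mapping.keys q. Poly_Mapping.keys m \<subseteq> V"
    and m: "m \<in> Poly_Mapping.keys (p * q)" and x: "x \<in> Poly_Mapping.keys m"
  obtain a b where "m = a + b" "a \<in> Poly_Mapping.keys p" "b \<in> Poly_Mapping.keys q"
    using keys_mult[of p q] m by blast
  then have "x \<in> Poly_Mapping.keys (a + b)" using x by simp
  then have "x \<in> Poly_Mapping.keys a \<union> Poly_Mapping.keys b" using keys_add[of a b] by (rule subsetD[rotated])
  moreover have "Poly_Mapping.keys a \<subseteq> V" using p \<open>a \<in> Poly_Mapping.keys p\<close> by (rule bspec)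
  moreover have "Poly_Mapping.keys b \<subseteq> V" using q \<open>b \<in> Poly_Mapping.keys q\<close> by (rule bspec)
  ultimately show "x \<in> V" by blast
qed

lemma polys_in_Var: "v \<in> V \<Longrightarrow> Var v \<in> polys_in V"
  unfolding polys_in_def Var_def by simp

lemma polys_in_Const: "Const c \<in> polys_in V"
  unfolding polys_in_def Const_def by simp

lemma Const_add: "Const (a + b) = Const a + Const b"
  unfolding Const_def by (rule single_add)
lemma Const_mult: "Const (a * b) = Const a * Const b"
  unfolding Const_def by (simp add: mult_single)
lemma Const_one: "Const 1 = 1"
  unfolding Const_def by simp

lemma sos_mono: assumes "V \<subseteq> W" "sos V p" shows "sos W p"
proof -
  obtain gs where "set gs \<subseteq> polys_in V" "p = sum_list (map (\<lambda>g. g * g) gs)" using assms(2) unfolding sos_def by blast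
  moreover have "polys_in V \<subseteq> polys_in W" using \<open>V \<subseteq> W\<close> by (rule polys_in_mono)
  ultimately show ?thesis unfolding sos_def by (intro exI[of _ gs]) auto
qed

lemma sos_zero: "sos V 0"
  unfolding sos_def by (rule exI[of _ "[]"]) simp

lemma sos_add: "sos V p \<Longrightarrow> sos V q \<Longrightarrow> sos V (p + q)"
  unfolding sos_def
proof (elim exE conjE)
  fix gs hs assume "set gs \<subseteq> polys_in V" "p = sum_list (map (\<lambda>g. g * g) gs)"
    "set hs \<subseteq> polys_in V" "q = sum_list (map (\<lambda>g. g * g) hs)"
  then show "\<exists>gs. set gs \<subseteq> polys_in V \<and> p + q = sum_list (map (\<lambda>g. g * g) gs)"
    by (intro exI[of _ "gs @ hs"] conjI) (simp_all only: set_append Un_subset_iff map_append sum_list_append)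
qed

lemma sos_sq: "g \<in> polys_in V \<Longrightarrow> sos V (g * g)"
  unfolding sos_def by (rule exI[of _ "[g]"]) simp

lemma sos_sum: "finite I \<Longrightarrow> (\<And>i. i \<in> I \<Longrightarrow> sos V (f i)) \<Longrightarrow> sos V (\<Sum>i\<in>I. f i)"
proof (induction I rule: finite_induct)
  case empty
  then show ?case by (simp add: sos_zero)
next
  case (insert x F)
  then have "sos V (f x)" "sos V (\<Sum>i\<in>F. f i)" by simp_all
  then show ?case using insert(1,2) by (simp add: sos_add)
qed

lemma tdeg_le_iff: "tdeg p \<le> k \<longleftrightarrow> (\<forall>m\<in>Poly_Mapping.keys p. (\<Sum>v\<in>Poly_Mapping.keys m. Poly_Mapping.lookup m v) \<le> k)"
  unfolding tdeg_def by (subst Max_le_iff) auto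

lemma tdeg_zero[simp]: "tdeg 0 = 0"
  by (simp add: tdeg_def)

lemma tdeg_add: "tdeg (p + q) \<le> max (tdeg p) (tdeg q)"
proof -
  have "\<forall>m\<in>Poly_Mapping.keys p. (\<Sum>v\<in>Poly_Mapping.keys m. Poly_Mapping.lookup m v) \<le> tdeg p"
    using tdeg_le_iff[of p "tdeg p"] by simp
  moreover have "\<forall>m\<in>Poly_Mapping.keys q. (\<Sum>v\<in>Poly_Mapping.keys m. Poly_Mapping.lookup m v) \<le> tdeg q"
    using tdeg_le_iff[of q "tdeg q"] by simp
  ultimately show ?thesis using keys_add[of p q] unfolding tdeg_le_iff
    by (metis (no_types, lifting) Un_iff le_max_iff_disj subsetD)
qed

lemma quadmod_mono:
  assumes "V \<subseteq> W" "d \<le> e" "S \<subseteq> S'" "finite S'"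
  shows "quadmod V d S \<subseteq> quadmod W e S'"
proof
  fix p assume "p \<in> quadmod V d S"
  then obtain s0 s where h: "sos V s0" "tdeg s0 \<le> d" "\<forall>a\<in>S. sos V (s a) \<and> tdeg (s a * a) \<le> d"
    "p = s0 + (\<Sum>a\<in>S. s a * a)" unfolding quadmod_def by blast
  define s' where "s' a = (if a \<in> S then s a else 0)" for a
  have "(\<Sum>a\<in>S'. s' a * a) = (\<Sum>a\<in>S. s' a * a)"
    by (rule sum.mono_neutral_right) (use assms in \<open>auto simp: s'_def\<close>)
  also have "\<dots> = (\<Sum>a\<in>S. s a * a)" by (simp add: s'_def)
  finally have "p = s0 + (\<Sum>a\<in>S'. s' a * a)" using h by simp
  moreover have "\<forall>a\<in>S'. sos W (s' a) \<and> tdeg (s' a * a) \<le> e"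
  proof
    fix a assume "a \<in> S'"
    show "sos W (s' a) \<and> tdeg (s' a * a) \<le> e"
    proof (cases "a \<in> S")
      case True
      then have "sos V (s a)" "tdeg (s a * a) \<le> d" using h(3) by auto
      then show ?thesis using True sos_mono[OF assms(1)] assms(2) by (simp add: s'_def)
    next
      case False
      then show ?thesis by (simp add: s'_def sos_zero)
    qed
  qed
  moreover have "sos W s0" using sos_mono[OF assms(1) h(1)] .
  moreover have "tdeg s0 \<le> e" using h(2) assms(2) by simp
  ultimately show "p \<in> quadmod W e S'"
    unfolding quadmod_def by (intro CollectI exI[of _ s0] exI[of _ s'] conjI)
qed

lemma quadmod_add:
  assumes "p \<in> quadmod V d S" "q \<in> quadmod V d S"
  shows "p + q \<in> quadmod V d S"
proof -
  obtain s0 s where h: "sos V s0" "tdeg s0 \<le> d" "\<forall>a\<in>S. sos V (s a) \<and> tdeg (s a * a) \<le> d"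
    "p = s0 + (\<Sum>a\<in>S. s a * a)" using assms(1) unfolding quadmod_def by blast
  obtain t0 t where g: "sos V t0" "tdeg t0 \<le> d" "\<forall>a\<in>S. sos V (t a) \<and> tdeg (t a * a) \<le> d"
    "q = t0 + (\<Sum>a\<in>S. t a * a)" using assms(2) unfolding quadmod_def by blast
  have e: "(\<Sum>a\<in>S. (s a + t a) * a) = (\<Sum>a\<in>S. s a * a) + (\<Sum>a\<in>S. t a * a)"
    by (simp only: distrib_right sum.distrib)
  have "p + q = (s0 + t0) + (\<Sum>a\<in>S. (s a + t a) * a)"
    unfolding e h(4) g(4) by (simp only: add_ac)
  moreover have "tdeg (s0 + t0) \<le> d" using tdeg_add[of s0 t0] h g by simp
  moreover have "\<forall>a\<in>S. sos V (s a + t a) \<and> tdeg ((s a + t a) * a) \<le> d"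
  proof
    fix a assume "a \<in> S"
    then have "sos V (s a)" "tdeg (s a * a) \<le> d" "sos V (t a)" "tdeg (t a * a) \<le> d"
      using h(3) g(3) by auto
    moreover have "tdeg ((s a + t a) * a) \<le> max (tdeg (s a * a)) (tdeg (t a * a))"
      using tdeg_add[of "s a * a" "t a * a"] by (simp add: distrib_right)
    ultimately show "sos V (s a + t a) \<and> tdeg ((s a + t a) * a) \<le> d"
      using sos_add by simp
  qed
  moreover have "sos V (s0 + t0)" using sos_add[OF h(1) g(1)] .
  ultimately show ?thesis unfolding quadmod_def
    by (intro CollectI exI[of _ "s0 + t0"] exI[of _ "\<lambda>a. s a + t a"] conjI)
qed

lemma quadmod_sos: "sos V p \<Longrightarrow> p \<in> quadmod V (tdeg p) S"
  unfolding quadmod_def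
  by (rule CollectI, rule exI[of _ p], rule exI[of _ "\<lambda>_. 0"]) (simp add: sos_zero)

lemma quadmod_gen:
  assumes "finite S" "a \<in> S" "sos V s"
  shows "s * a \<in> quadmod V (tdeg (s * a)) S"
proof -
  define f where "f b = (if b = a then s else 0)" for b
  have "(\<Sum>b\<in>S. f b * b) = s * a"
  proof -
    have "(\<Sum>b\<in>S. f b * b) = (\<Sum>b\<in>S. if b = a then s * a else 0)"
      by (rule sum.cong) (auto simp: f_def)
    then show ?thesis using assms(1,2) by simp
  qed
  moreover have "\<forall>b\<in>S. sos V (f b) \<and> tdeg (f b * b) \<le> tdeg (s * a)"
    using assms sos_zero by (simp add: f_def)
  ultimately show ?thesis unfolding quadmod_def
    by (intro CollectI exI[of _ 0] exI[of _ f]) (simp add: sos_zero)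
qed


lemma quadmod_add2:
  assumes "p \<in> quadmod V d1 S" "q \<in> quadmod V d2 S" "finite S"
  shows "p + q \<in> quadmod V (max d1 d2) S"
proof -
  have "p \<in> quadmod V (max d1 d2) S" "q \<in> quadmod V (max d1 d2) S"
    using assms quadmod_mono[of V V d1 "max d1 d2" S S] quadmod_mono[of V V d2 "max d1 d2" S S] by auto
  then show ?thesis by (rule quadmod_add)
qed

lemma idx_eq:
  fixes i j i' j' n :: nat
  assumes "j < n" "j' < n" "i * n + j = i' * n + j'"
  shows "i = i' \<and> j = j'"
proof -
  have a: "(i * n + j) div n = i" "(i * n + j) mod n = j" using assms(1) by simp_all
  have b: "(i' * n + j') div n = i'" "(i' * n + j') mod n = j'" using assms(2) by simp_all
  have "i = (i * n + j) div n" using a(1) by (rule sym)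
  also have "\<dots> = (i' * n + j') div n" by (simp only: assms(3))
  also have "\<dots> = i'" by (rule b(1))
  finally have 1: "i = i'" .
  have "j = (i * n + j) mod n" using a(2) by (rule sym)
  also have "\<dots> = (i' * n + j') mod n" by (simp only: assms(3))
  also have "\<dots> = j'" by (rule b(2))
  finally show ?thesis using 1 by blast
qed

lemma idx_bound:
  fixes a b n :: nat
  assumes "a < n" "b < n" "\<not> (a = n - 1 \<and> b = n - 1)"
  shows "1 + a * n + b < n\<^sup>2"
proof (cases "a < n - 1")
  case True
  then have "(a + 1) * n \<le> (n - 1) * n" by (intro mult_le_mono1) simp
  moreover have "(n - 1) * n < n * n" using assms by simp
  ultimately show ?thesis using assms(2) by (simp add: power2_eq_square algebra_simps)
next
  case False
  then have "a = n - 1" "b < n - 1" using assms by auto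
  then have "1 + a * n + b < (n - 1) * n + n" by simp
  also have "\<dots> = n * n" using assms by (cases n) auto
  finally show ?thesis by (simp add: power2_eq_square)
qed

lemma x_vars_split:
  "x_vars n = (\<lambda>i. re_var n i i) ` {..<n-1}
     \<union> (\<lambda>(j,i). re_var n i j) ` (SIGMA j:{..<n}. {..<j})
     \<union> (\<lambda>(j,i). im_var n i j) ` (SIGMA j:{..<n}. {..<j})"
proof (intro equalityI subsetI)
  fix v assume "v \<in> x_vars n"
  then consider (re) i j where "v = re_var n i j" "i \<le> j" "j < n" "\<not> (i = n - 1 \<and> j = n - 1)"
    | (im) i j where "v = im_var n i j" "i < j" "j < n"
    unfolding x_vars_def by blast
  then show "v \<in> (\<lambda>i. re_var n i i) ` {..<n-1}
     \<union> (\<lambda>(j,i). re_var n i j) ` (SIGMA j:{..<n}. {..<j})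
     \<union> (\<lambda>(j,i). im_var n i j) ` (SIGMA j:{..<n}. {..<j})"
  proof cases
    case re
    show ?thesis
    proof (cases "i = j")
      case True
      then have "i < n - 1" using re by auto
      then show ?thesis using re True by blast
    next
      case False
      then have "(j, i) \<in> (SIGMA j:{..<n}. {..<j})" using re by auto
      then show ?thesis using re by force
    qed
  next
    case im
    then have "(j, i) \<in> (SIGMA j:{..<n}. {..<j})" by auto
    then show ?thesis using im by force
  qed
next
  fix v assume "v \<in> (\<lambda>i. re_var n i i) ` {..<n-1}
     \<union> (\<lambda>(j,i). re_var n i j) ` (SIGMA j:{..<n}. {..<j})
     \<union> (\<lambda>(j,i). im_var n i j) ` (SIGMA j:{..<n}. {..<j})"
  then consider (d) i where "v = re_var n i i" "i < n - 1"
    | (r) i j where "v = re_var n i j" "i < j" "j < n"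
    | (m) i j where "v = im_var n i j" "i < j" "j < n" by auto
  then show "v \<in> x_vars n"
  proof cases
    case d
    then have "i \<le> i \<and> i < n \<and> \<not> (i = n - 1 \<and> i = n - 1)" by auto
    then show ?thesis using d unfolding x_vars_def by blast
  next
    case r
    then have "i \<le> j \<and> j < n \<and> \<not> (i = n - 1 \<and> j = n - 1)" by auto
    then show ?thesis using r unfolding x_vars_def by blast
  next
    case m
    then show ?thesis unfolding x_vars_def by blast
  qed
qed

lemma re_inj: "re_var n i j = re_var n i' j' \<Longrightarrow> j < n \<Longrightarrow> j' < n \<Longrightarrow> i = i' \<and> j = j'"
  unfolding re_var_def by (rule idx_eq) simp_all

lemma im_inj: "im_var n i j = im_var n i' j' \<Longrightarrow> i < n \<Longrightarrow> i' < n \<Longrightarrow> i = i' \<and> j = j'"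
  unfolding im_var_def using idx_eq[of i n i' j j'] by simp

lemma re_im: "re_var n i j = im_var n i' j' \<Longrightarrow> j < n \<Longrightarrow> i' < n \<Longrightarrow> i = j' \<and> j = i'"
  unfolding re_var_def im_var_def using idx_eq[of j n i' i j'] by simp

lemma x_sum:
  assumes "n \<ge> 1"
  shows "(\<Sum>v\<in>x_vars n. Var v * Var v) = (\<Sum>i<n - 1. (Var (re_var n i i))\<^sup>2)
     + (\<Sum>j<n. \<Sum>i<j. (Var (re_var n i j))\<^sup>2 + (Var (im_var n i j))\<^sup>2)"
proof -
  define D where "D = (\<lambda>i. re_var n i i) ` {..<n-1}"
  define P where "P = (SIGMA j:{..<n}. {..<j})"
  define R where "R = (\<lambda>(j,i). re_var n i j) ` P"
  define I where "I = (\<lambda>(j,i). im_var n i j) ` P"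
  have fin: "finite P" unfolding P_def by auto
  have injD: "inj_on (\<lambda>i. re_var n i i) {..<n-1}"
  proof (rule inj_onI)
    fix x y assume "x \<in> {..<n-1}" "y \<in> {..<n-1}" "re_var n x x = re_var n y y"
    then show "x = y" using re_inj[of n x x y y] by simp
  qed
  have injR: "inj_on (\<lambda>(j,i). re_var n i j) P"
  proof (rule inj_onI)
    fix x y assume "x \<in> P" "y \<in> P" "(\<lambda>(j,i). re_var n i j) x = (\<lambda>(j,i). re_var n i j) y"
    then show "x = y" unfolding P_def using re_inj[of n "snd x" "fst x" "snd y" "fst y"]
      by (cases x, cases y) simp
  qed
  have injI: "inj_on (\<lambda>(j,i). im_var n i j) P"
  proof (rule inj_onI)
    fix x y assume "x \<in> P" "y \<in> P" "(\<lambda>(j,i). im_var n i j) x = (\<lambda>(j,i). im_var n i j) y"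
    then show "x = y" unfolding P_def using im_inj[of n "snd x" "fst x" "snd y" "fst y"]
      by (cases x, cases y) simp
  qed
  have DR: "D \<inter> R = {}"
  proof (rule ccontr)
    assume "D \<inter> R \<noteq> {}"
    then obtain v where v: "v \<in> D" "v \<in> R" by blast
    obtain i j k where "i < n - 1" "(j, k) \<in> P" "re_var n i i = re_var n k j"
    proof -
      from v(1) obtain x where x: "x \<in> {..<n-1}" "v = (\<lambda>i. re_var n i i) x" unfolding D_def by blast
      from v(2) obtain y where y: "y \<in> P" "v = (\<lambda>(j,i). re_var n i j) y" unfolding R_def by blast
      show ?thesis using x y that[of x "fst y" "snd y"] by (cases y) auto
    qed
    then show False unfolding P_def using re_inj[of n i i k j] by simp
  qed
  have DI: "D \<inter> I = {}"
  proof (rule ccontr)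
    assume "D \<inter> I \<noteq> {}"
    then obtain v where v: "v \<in> D" "v \<in> I" by blast
    obtain i j k where "i < n - 1" "(j, k) \<in> P" "re_var n i i = im_var n k j"
    proof -
      from v(1) obtain x where x: "x \<in> {..<n-1}" "v = (\<lambda>i. re_var n i i) x" unfolding D_def by blast
      from v(2) obtain y where y: "y \<in> P" "v = (\<lambda>(j,i). im_var n i j) y" unfolding I_def by blast
      show ?thesis using x y that[of x "fst y" "snd y"] by (cases y) auto
    qed
    then show False unfolding P_def using re_im[of n i i k j] by simp
  qed
  have RI: "R \<inter> I = {}"
  proof (rule ccontr)
    assume "R \<inter> I \<noteq> {}"
    then obtain v where v: "v \<in> R" "v \<in> I" by blast
    obtain i j k l where "(j, i) \<in> P" "(l, k) \<in> P" "re_var n i j = im_var n k l"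
    proof -
      from v(1) obtain x where x: "x \<in> P" "v = (\<lambda>(j,i). re_var n i j) x" unfolding R_def by blast
      from v(2) obtain y where y: "y \<in> P" "v = (\<lambda>(j,i). im_var n i j) y" unfolding I_def by blast
      obtain a b c e where xy: "x = (a, b)" "y = (c, e)" by (cases x, cases y) auto
      show ?thesis using x y xy by (intro that[where i=b and j=a and k=e and l=c]) auto
    qed
    then show False unfolding P_def using re_im[of n i j k l] by simp
  qed
  have fD: "finite D" "finite R" "finite I" unfolding D_def R_def I_def using fin by simp_all
  have "x_vars n = D \<union> R \<union> I" unfolding D_def R_def I_def P_def by (rule x_vars_split)
  then have "(\<Sum>v\<in>x_vars n. Var v * Var v) = (\<Sum>v\<in>D \<union> R. Var v * Var v) + (\<Sum>v\<in>I. Var v * Var v)"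
    using DI RI fD by (simp add: sum.union_disjoint Int_Un_distrib2)
  also have "(\<Sum>v\<in>D \<union> R. Var v * Var v) = (\<Sum>v\<in>D. Var v * Var v) + (\<Sum>v\<in>R. Var v * Var v)"
    using DR fD by (simp add: sum.union_disjoint)
  also have "(\<Sum>v\<in>D. Var v * Var v) = (\<Sum>i<n - 1. (Var (re_var n i i))\<^sup>2)"
    unfolding D_def by (subst sum.reindex[OF injD]) (simp_all add: power2_eq_square)
  also have "(\<Sum>v\<in>R. Var v * Var v) = (\<Sum>(j,i)\<in>P. (Var (re_var n i j))\<^sup>2)"
    unfolding R_def by (subst sum.reindex[OF injR]) (simp_all add: power2_eq_square case_prod_unfold)
  also have "(\<Sum>v\<in>I. Var v * Var v) = (\<Sum>(j,i)\<in>P. (Var (im_var n i j))\<^sup>2)"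
    unfolding I_def by (subst sum.reindex[OF injI]) (simp_all add: power2_eq_square case_prod_unfold)
  also have "(\<Sum>(j,i)\<in>P. (Var (re_var n i j))\<^sup>2) = (\<Sum>j<n. \<Sum>i<j. (Var (re_var n i j))\<^sup>2)"
    unfolding P_def by (rule sum.Sigma[symmetric]) simp_all
  also have "(\<Sum>(j,i)\<in>P. (Var (im_var n i j))\<^sup>2) = (\<Sum>j<n. \<Sum>i<j. (Var (im_var n i j))\<^sup>2)"
    unfolding P_def by (rule sum.Sigma[symmetric]) simp_all
  finally show ?thesis by (simp add: sum.distrib add.assoc)
qed

lemma x_vars_bound:
  assumes "v \<in> x_vars n"
  shows "1 \<le> v \<and> v < n\<^sup>2"
  using assms unfolding x_vars_def
proof (elim UnE CollectE exE conjE)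
  fix i j assume "v = re_var n i j" "i \<le> j" "j < n" "\<not> (i = n - 1 \<and> j = n - 1)"
  then show ?thesis using idx_bound[of i n j] by (simp add: re_var_def)
next
  fix i j assume "v = im_var n i j" "i < j" "j < n"
  then show ?thesis using idx_bound[of j n i] by (simp add: im_var_def)
qed

lemma x_vars_finite: "finite (x_vars n)"
proof -
  have "x_vars n \<subseteq> {..<n\<^sup>2}" using x_vars_bound by auto
  then show ?thesis using finite_subset by blast
qed

lemma ring_id:
  fixes c ci t :: "'a::comm_ring_1"
  assumes "c * ci = 1"
  shows "c * c - t * t = c * (c - t) + (ci * t * t) * (c - t) + (ci * (c - t) * (c - t)) * t"
proof -
  have "c * (c - t) + (ci * t * t) * (c - t) + (ci * (c - t) * (c - t)) * t
        = c * (c - t) + (c * ci) * t * (c - t)" by (simp add: algebra_simps)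
  also have "\<dots> = c * c - t * t" using assms by (simp add: algebra_simps)
  finally show ?thesis by simp
qed


lemma polys_in_zero: "0 \<in> polys_in V"
  unfolding polys_in_def by simp

lemma polys_in_one: "1 \<in> polys_in V"
  using polys_in_Const[of 1 V] by (simp add: Const_one)

lemma polys_in_sum: "finite I \<Longrightarrow> (\<And>i. i \<in> I \<Longrightarrow> f i \<in> polys_in V) \<Longrightarrow> (\<Sum>i\<in>I. f i) \<in> polys_in V"
proof (induction I rule: finite_induct)
  case empty
  then show ?case by (simp add: polys_in_zero)
next
  case (insert x F)
  then have "f x \<in> polys_in V" "(\<Sum>i\<in>F. f i) \<in> polys_in V" by simp_all
  then show ?case using insert(1,2) by (simp add: polys_in_add)
qed

lemma t_part:
  assumes "T > 0" "t_var \<in> V" "finite S" "T_set T \<subseteq> S"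
  shows "\<exists>d. Const T * Const T - Var t_var * Var t_var \<in> quadmod V d S"
proof -
  define t where "t = Var t_var"
  define c where "c = Const T"
  define ci where "ci = Const (1 / T)"
  define r where "r = Const (sqrt (1 / T))"
  have cci: "c * ci = 1" unfolding c_def ci_def using assms(1)
    by (simp add: Const_mult[symmetric] Const_one)
  have rr: "r * r = ci" unfolding r_def ci_def using assms(1)
    by (simp add: Const_mult[symmetric])
  have id: "c * c - t * t = c * (c - t) + (ci * t * t) * (c - t) + (ci * (c - t) * (c - t)) * t"
    by (rule ring_id[OF cci])
  have tP: "t \<in> polys_in V" unfolding t_def using assms(2) by (rule polys_in_Var)
  have cP: "c \<in> polys_in V" "r \<in> polys_in V" unfolding c_def r_def by (rule polys_in_Const)+
  have mem: "c - t \<in> S" "t \<in> S" using assms(4) unfolding T_set_def c_def t_def by auto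
  have s1: "sos V c"
  proof -
    have e: "c = Const (sqrt T) * Const (sqrt T)" unfolding c_def using assms(1)
      by (simp add: Const_mult[symmetric])
    show ?thesis unfolding e by (rule sos_sq[OF polys_in_Const])
  qed
  have s2: "sos V (ci * t * t)"
  proof -
    have e: "ci * t * t = (r * t) * (r * t)" unfolding rr[symmetric] by (simp add: algebra_simps)
    show ?thesis unfolding e by (rule sos_sq[OF polys_in_mult[OF cP(2) tP]])
  qed
  have s3: "sos V (ci * (c - t) * (c - t))"
  proof -
    have e: "ci * (c - t) * (c - t) = (r * (c - t)) * (r * (c - t))" unfolding rr[symmetric] by (simp add: algebra_simps)
    show ?thesis unfolding e by (rule sos_sq[OF polys_in_mult[OF cP(2) polys_in_diff[OF cP(1) tP]]])
  qed
  have q1: "c * (c - t) \<in> quadmod V (tdeg (c * (c - t))) S" by (rule quadmod_gen[OF assms(3) mem(1) s1])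
  have q2: "(ci * t * t) * (c - t) \<in> quadmod V (tdeg ((ci * t * t) * (c - t))) S" by (rule quadmod_gen[OF assms(3) mem(1) s2])
  have q3: "(ci * (c - t) * (c - t)) * t \<in> quadmod V (tdeg ((ci * (c - t) * (c - t)) * t)) S" by (rule quadmod_gen[OF assms(3) mem(2) s3])
  have "c * c - t * t \<in> quadmod V (max (max (tdeg (c * (c - t))) (tdeg ((ci * t * t) * (c - t)))) (tdeg ((ci * (c - t) * (c - t)) * t))) S"
    unfolding id by (intro quadmod_add2 q1 q2 q3 assms(3))
  then show ?thesis unfolding c_def t_def by blast
qed

lemma x_part:
  assumes "n \<ge> 1" "x_vars n \<subseteq> V" "finite S" "B_set n \<subseteq> S"
  shows "\<exists>d. 1 - (\<Sum>v\<in>x_vars n. Var v * Var v) \<in> quadmod V d S"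
proof -
  define A where "A = 1 - (\<Sum>i<n - 1. Var (re_var n i i))"
  define Dg where "Dg = (\<Sum>i<n - 1. (Var (re_var n i i))\<^sup>2)"
  define Of where "Of = (\<Sum>j<n. \<Sum>i<j. (Var (re_var n i j))\<^sup>2 + (Var (im_var n i j))\<^sup>2)"
  have tr: "trace_sq n = A\<^sup>2 + Dg + 2 * Of" unfolding trace_sq_def A_def Dg_def Of_def ..
  have xs: "(\<Sum>v\<in>x_vars n. Var v * Var v) = Dg + Of" unfolding Dg_def Of_def by (rule x_sum[OF assms(1)])
  have id: "1 - (\<Sum>v\<in>x_vars n. Var v * Var v) = 1 * (1 - trace_sq n) + (A * A + Of)"
    unfolding xs tr by (simp add: algebra_simps power2_eq_square mult_2)
  have reV: "Var (re_var n i j) \<in> polys_in V" if "i \<le> j" "j < n" "\<not> (i = n - 1 \<and> j = n - 1)" for i j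
    using that assms(2) unfolding x_vars_def by (intro polys_in_Var) blast
  have imV: "Var (im_var n i j) \<in> polys_in V" if "i < j" "j < n" for i j
    using that assms(2) unfolding x_vars_def by (intro polys_in_Var) blast
  have AP: "A \<in> polys_in V" unfolding A_def
    by (intro polys_in_diff polys_in_one polys_in_sum reV) auto
  have sO: "sos V Of" unfolding Of_def power2_eq_square
    by (intro sos_sum sos_add sos_sq reV imV) auto
  have sR: "sos V (A * A + Of)" by (intro sos_add sos_sq AP sO)
  have mem: "1 - trace_sq n \<in> S" using assms(4) unfolding B_set_def by auto
  have s1: "sos V 1" using sos_sq[OF polys_in_one, of V] by simp
  have q1: "1 * (1 - trace_sq n) \<in> quadmod V (tdeg (1 * (1 - trace_sq n))) S"
    by (rule quadmod_gen[OF assms(3) mem s1])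
  have q2: "A * A + Of \<in> quadmod V (tdeg (A * A + Of)) S" by (rule quadmod_sos[OF sR])
  show ?thesis unfolding id using quadmod_add2[OF q1 q2 assms(3)] by blast
qed


theorem lemma4:
  fixes n K :: nat and T :: real and U :: "mpoly set"
  assumes "n \<ge> 1" and "T > 0" and "K \<ge> 1"
    and "finite U" and "U \<subseteq> polys_in (u_vars n K)"
    and "compact {a :: nat \<Rightarrow> real. (\<forall>v. v \<notin> u_vars n K \<longrightarrow> a v = 0) \<and> (\<forall>q\<in>U. peval q a \<ge> 0)}"
    and "putinar (u_vars n K) U"
  shows "putinar (all_vars n K) (T_set T \<union> B_set n \<union> U)"
proof -
  define V where "V = all_vars n K"
  define S where "S = T_set T \<union> B_set n \<union> U"
  have finS: "finite S" unfolding S_def T_set_def B_set_def using assms(4) by simp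
  have uV: "u_vars n K \<subseteq> V" and xV: "x_vars n \<subseteq> V" and tV: "t_var \<in> V"
    unfolding V_def all_vars_def by auto
  obtain M d where M: "M > 0" and PU: "Const M - (\<Sum>v\<in>u_vars n K. Var v * Var v) \<in> quadmod (u_vars n K) d U"
    using assms(7) unfolding putinar_def by blast
  have PU': "Const M - (\<Sum>v\<in>u_vars n K. Var v * Var v) \<in> quadmod V d S"
    using PU quadmod_mono[OF uV order_refl _ finS, of U] unfolding S_def by blast
  obtain d1 where PT: "Const T * Const T - Var t_var * Var t_var \<in> quadmod V d1 S"
    using t_part[OF assms(2) tV finS] unfolding S_def by blast
  obtain d2 where PX: "1 - (\<Sum>v\<in>x_vars n. Var v * Var v) \<in> quadmod V d2 S"
    using x_part[OF assms(1) xV finS] unfolding S_def by blast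
  have disj1: "t_var \<notin> x_vars n" using x_vars_bound[of t_var n] by (auto simp: t_var_def)
  have disj2: "t_var \<notin> u_vars n K" using assms(1) by (simp add: t_var_def u_vars_def)
  have disj3: "x_vars n \<inter> u_vars n K = {}" using x_vars_bound[of _ n] by (force simp: u_vars_def)
  have finX: "finite (x_vars n)" by (rule x_vars_finite)
  have finU: "finite (u_vars n K)" by (simp add: u_vars_def)
  have Vsplit: "V = insert t_var (x_vars n \<union> u_vars n K)" unfolding V_def all_vars_def by auto
  have sumV: "(\<Sum>v\<in>V. Var v * Var v) = Var t_var * Var t_var + (\<Sum>v\<in>x_vars n. Var v * Var v) + (\<Sum>v\<in>u_vars n K. Var v * Var v)"
    unfolding Vsplit using disj1 disj2 disj3 finX finU by (simp add: sum.union_disjoint add.assoc)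
  have CM: "Const (T * T + 1 + M) = Const T * Const T + 1 + Const M"
    by (simp add: Const_add Const_mult Const_one)
  have eq: "Const (T * T + 1 + M) - (\<Sum>v\<in>V. Var v * Var v)
     = (Const T * Const T - Var t_var * Var t_var) + (1 - (\<Sum>v\<in>x_vars n. Var v * Var v))
       + (Const M - (\<Sum>v\<in>u_vars n K. Var v * Var v))"
    unfolding CM sumV by (simp add: algebra_simps)
  have "Const (T * T + 1 + M) - (\<Sum>v\<in>V. Var v * Var v) \<in> quadmod V (max (max d1 d2) d) S"
    unfolding eq by (intro quadmod_add2 PT PX PU' finS)
  moreover have "T * T + 1 + M > 0" proof -
    have "T * T \<ge> 0" by simp
    then show ?thesis using M by linarith
  qed
  ultimately show ?thesis unfolding putinar_def V_def S_def by blast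
qed

end
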